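(* Let $n\ge 0$ and let $\alpha$ be a word of length $2^n$ over $\{0,1\}$. If $i_1^{(n)}i_2^{(n)}\alpha\in\mathcal{L}^*(E_{\mathbb{Z}})$ or $\alpha\, i_1^{(n)}i_2^{(n)}\in\mathcal{L}^*(E_{\mathbb{Z}})$ for some $i_1,i_2\in\{0,1\}$, then $\alpha=i^{(n)}$ for some $i\in\{0,1\}$.
   Context: The two-sided Thue--Morse sequence $\omega=(\omega_k)_{k\in\mathbb{Z}}$ over $\{0,1\}$ is defined by $\omega_0=0$, $\omega_{2^n+j}=1-\omega_j$ for $n\ge0$, $0\le j<2^n$, and $\omega_{-i}=\omega_{i-1}$ for $i\ge1$. $\mathcal{L}^*(E_{\mathbb{Z}})$ denotes the set of finite nonempty words $\omega_m\omega_{m+1}\cdots\omega_n$ ($m\le n$) occurring in $\omega$. Blocks $i^{(n)}$: $0^{(0)}=0$, $1^{(0)}=1$, and inductively $0^{(n)}=0^{(n-1)}1^{(n-1)}$, $1^{(n)}=1^{(n-1)}0^{(n-1)}$ (concatenation); $|i^{(n)}|=2^n$. *)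

theory Defs
  imports Main
begin

text \<open>One-sided Thue--Morse sequence: omega_0 = 0 and omega_(2^n + j) = 1 - omega_j
  for 0 <= j < 2^n. For k >= 1, the unique such n is the largest n with 2^n <= k.\<close>
function tm :: "nat \<Rightarrow> nat" where
  "tm k = (if k = 0 then 0
           else 1 - tm (k - 2 ^ (GREATEST n. 2 ^ n \<le> k)))"
  by auto
termination
proof (relation "measure id")
  fix k :: nat
  assume "k \<noteq> 0"
  hence "2 ^ 0 \<le> k" by simp
  moreover have "\<forall>n. 2 ^ n \<le> k \<longrightarrow> n \<le> k"
    by (metis le_trans less_exp less_imp_le_nat)
  ultimately have "2 ^ (GREATEST n. 2 ^ n \<le> k) \<le> k"
    by (metis (no_types, lifting) GreatestI_nat)
  moreover have "(0::nat) < 2 ^ (GREATEST n. 2 ^ n \<le> k)" by simp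
  ultimately show "(k - 2 ^ (GREATEST n. 2 ^ n \<le> k), k) \<in> measure id"
    using \<open>k \<noteq> 0\<close> by simp
qed simp

declare tm.simps [simp del]

definition tmZ :: "int \<Rightarrow> nat" where
  "tmZ k = (if k \<ge> 0 then tm (nat k) else tm (nat (- k - 1)))"

definition tm_language :: "nat list set" where
  "tm_language = {map tmZ [m..n] | m n. m \<le> n}"

fun block :: "nat \<Rightarrow> nat \<Rightarrow> nat list" where
  "block i 0 = [i]"
| "block i (Suc n) = block i n @ block (1 - i) n"

end

theory Submission imports Defs begin

lemma tm_le1: "tm k \<le> 1" by (subst tm.simps) auto
lemma tm_01: "tm k = 0 \<or> tm k = 1" using tm_le1[of k] by linarith
lemma tm_0[simp]: "tm 0 = 0" by (subst tm.simps) simp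

lemma greatest_pow: "j < 2^N \<Longrightarrow> (GREATEST n. (2::nat)^n \<le> 2^N + j) = N"
proof (rule Greatest_equality)
  fix y assume "j < 2^N" "(2::nat)^y \<le> 2^N + j"
  hence "(2::nat)^y < 2^Suc N" by simp
  thus "y \<le> N" using power_less_imp_less_exp[of "2::nat" y "Suc N"] by simp
qed simp

lemma tm_pow: "j < 2^N \<Longrightarrow> tm (2^N + j) = 1 - tm j"
  by (subst tm.simps) (simp add: greatest_pow)

lemma tm_double: "tm (2*k) = tm k \<and> tm (2*k+1) = 1 - tm k"
proof (induction k rule: less_induct)
  case (less k)
  show ?case
  proof (cases "k = 0")
    case True
    then show ?thesis using tm_pow[of 0 0] by simp
  next
    case False
    then obtain N where N: "2^N \<le> k" "k < 2^(N+1)" using ex_power_ivl1[of 2 k] by auto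
    define j where "j = k - 2^N"
    have k: "k = 2^N + j" "j < 2^N" using N j_def by auto
    have jk: "j < k" using k by simp
    have a: "2*k = 2^(Suc N) + 2*j" "2*j < 2^Suc N" using k by auto
    have b: "2*k+1 = 2^(Suc N) + (2*j+1)" "2*j+1 < 2^Suc N" using k by auto
    have "tm (2*k) = 1 - tm j" using a tm_pow less[OF jk] by metis
    moreover have "tm (2*k+1) = tm j" using b tm_pow less[OF jk] tm_le1[of j]
      by (metis diff_diff_cancel)
    moreover have "tm k = 1 - tm j" using k tm_pow by metis
    ultimately show ?thesis using tm_le1[of j] by simp
  qed
qed

lemma tm_split: "r < 2^n \<Longrightarrow> tm (2^n*q + r) = (tm q + tm r) mod 2"
proof (induction n arbitrary: q r)
  case 0
  then show ?case using tm_01[of q] by auto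
next
  case (Suc n)
  show ?case
  proof (cases "r < 2^n")
    case True
    have "tm (2^Suc n*q + r) = tm (2^n*(2*q) + r)" by (simp add: mult.assoc mult.left_commute)
    also have "\<dots> = (tm q + tm r) mod 2" using Suc.IH[OF True] tm_double by simp
    finally show ?thesis .
  next
    case False
    define r' where "r' = r - 2^n"
    have r: "r = 2^n + r'" "r' < 2^n" using False Suc.prems r'_def by auto
    have "tm (2^Suc n*q + r) = tm (2^n*(2*q+1) + r')" using r by (simp add: algebra_simps)
    also have "\<dots> = (tm (2*q+1) + tm r') mod 2" by (rule Suc.IH[OF r(2)])
    also have "\<dots> = (1 - tm q + tm r') mod 2" using tm_double[of q] by simp
    also have "\<dots> = (tm q + tm r) mod 2" using r tm_pow[of r' n] tm_01[of q] tm_01[of r'] by auto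
    finally show ?thesis .
  qed
qed

lemma tm_2: "tm (2*q + b) = (tm q + b) mod 2" if "b < 2"
  using tm_split[of b 1 q] that tm_pow[of 0 0] by (cases b) auto

lemma block_map: "i \<le> 1 \<Longrightarrow> block i n = map (\<lambda>r. (i + tm r) mod 2) [0..<2^n]"
proof (induction n arbitrary: i)
  case 0
  then show ?case by simp
next
  case (Suc n)
  have e: "[0..<2^Suc n] = [0..<2^n] @ map (\<lambda>r. r + 2^n) [0..<2^n]"
    using upt_add_eq_append[of 0 "2^n" "2^n"] map_add_upt[of "2^n" "2^n"] by (simp add: mult_2)
  have i1: "1 - i \<le> 1" by simp
  have "map (\<lambda>r. (i + tm r) mod 2) (map (\<lambda>r. r + 2^n) [0..<2^n]) = map (\<lambda>r. (1 - i + tm r) mod 2) [0..<2^n]"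
    unfolding map_map
  proof (rule map_cong[OF refl])
    fix r assume "r \<in> set [0..<2^n]"
    hence "tm (r + 2^n) = 1 - tm r" using tm_pow[of r n] by (simp add: add.commute)
    thus "((\<lambda>r. (i + tm r) mod 2) \<circ> (\<lambda>r. r + 2^n)) r = (1 - i + tm r) mod 2" using Suc.prems tm_01[of r] by (cases i) (auto elim: disjE)
  qed
  then show ?case using Suc.IH[OF Suc.prems] Suc.IH[OF i1] e by simp
qed


lemma ar: assumes "(x::nat) \<le> 1" "b \<le> 1" shows "((N + x) mod 2 + (1 - b)) mod 2 = (Suc N + (x + b) mod 2) mod 2"
proof -
  have "x = 0 \<or> x = 1" "b = 0 \<or> b = 1" using assms by auto
  moreover have "N mod 2 = 0 \<or> N mod 2 = 1" by auto
  ultimately show ?thesis by (elim disjE) (simp_all add: mod_Suc mod_add_left_eq[of N, symmetric] mod_add_eq[symmetric])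
qed

lemma tm_compl: "j < 2^N \<Longrightarrow> tm (2^N - 1 - j) = (N + tm j) mod 2"
proof (induction N arbitrary: j)
  case 0
  then show ?case by simp
next
  case (Suc N)
  define j' where "j' = j div 2"
  define b where "b = j mod 2"
  have j: "j = 2*j' + b" "b < 2" "j' < 2^N" using Suc.prems j'_def b_def by auto
  have e: "2^Suc N - 1 - j = 2*(2^N - 1 - j') + (1 - b)" using j by (auto simp: algebra_simps)
  have "tm (2^Suc N - 1 - j) = (tm (2^N - 1 - j') + (1 - b)) mod 2"
    unfolding e by (rule tm_2) simp
  also have "\<dots> = ((N + tm j') mod 2 + (1 - b)) mod 2" using Suc.IH[OF j(3)] by simp
  finally have a: "tm (2^Suc N - 1 - j) = ((N + tm j') mod 2 + (1 - b)) mod 2" .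
  have c: "tm j = (tm j' + b) mod 2" using tm_2[OF j(2), of j'] j(1) by simp
  have "b \<le> 1" using j(2) by simp
  from ar[OF tm_le1 this, of N j'] show ?case using a c by simp
qed

lemma noncube: "\<not> (tm p = tm (p+1) \<and> tm (p+1) = tm (p+2))"
proof (cases "even p")
  case True
  then obtain s where "p = 2*s" by blast
  then show ?thesis using tm_double[of s] tm_01[of s] by auto
next
  case False
  then obtain s where p: "p = 2*s+1" using oddE by blast
  have "p+1 = 2*(s+1)" "p+2 = 2*(s+1)+1" using p by auto
  then show ?thesis using tm_double[of "s+1"] tm_01[of "s+1"] by auto
qed

lemma baseB: assumes "tm (q+1) \<noteq> tm q" "tm (q+3) \<noteq> tm (q+2)" shows "even q"
proof (rule ccontr)
  assume "odd q"
  then obtain p where q: "q = 2*p+1" using oddE by blast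
  have e: "q+1 = 2*(p+1)" "q+2 = 2*(p+1)+1" "q+3 = 2*(p+2)" using q by auto
  have "tm q = 1 - tm p" using q tm_double by simp
  moreover have "tm (q+1) = tm (p+1)" using e tm_double by metis
  moreover have "tm (q+2) = 1 - tm (p+1)" using e tm_double by metis
  moreover have "tm (q+3) = tm (p+2)" using e tm_double by metis
  ultimately have "tm p = tm (p+1) \<and> tm (p+1) = tm (p+2)"
    using assms tm_01[of p] tm_01[of "p+1"] tm_01[of "p+2"] by auto
  thus False using noncube by blast
qed

lemma tm_pow0: "tm (2^n) = 1" using tm_pow[of 0 n] by simp


lemma mod_succ_ne: "((x::nat)+1) mod 2 \<noteq> x mod 2" by (simp add: mod_Suc)

lemma sync: "(\<forall>k<2^n. tm (m+k) = (i1 + tm k) mod 2) \<Longrightarrow> (\<forall>k<2^n. tm (m+2^n+k) = (i2 + tm k) mod 2) \<Longrightarrow> 2^n dvd m"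
proof (induction n arbitrary: m i1 i2)
  case 0
  show ?case by simp
next
  case (Suc n)
  have P1: "tm (m+k) = (i1 + tm k) mod 2" if "k < 2^Suc n" for k using Suc.prems(1) that by blast
  have P2: "tm (m+2^Suc n+k) = (i2 + tm k) mod 2" if "k < 2^Suc n" for k using Suc.prems(2) that by blast
  have h1: "\<forall>k<2^n. tm (m+k) = (i1 + tm k) mod 2" using P1 by simp
  have h2: "\<forall>k<2^n. tm (m+2^n+k) = ((i1+1) + tm k) mod 2"
  proof (intro allI impI)
    fix k :: nat assume k: "k < 2^n"
    have "tm (m + (2^n+k)) = (i1 + tm (2^n+k)) mod 2" using P1 k by simp
    also have "\<dots> = (i1 + (1 - tm k)) mod 2" using tm_pow[OF k] by simp
    also have "\<dots> = ((i1+1) + tm k) mod 2" using tm_01[of k] by (elim disjE) simp_all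
    finally show "tm (m+2^n+k) = ((i1+1) + tm k) mod 2" by (simp add: add.assoc)
  qed
  from Suc.IH[OF h1 h2] obtain q where m: "m = 2^n*q" by blast
  have t: "tm (2^n*x) = tm x" for x using tm_split[of 0 n x] tm_01[of x] by auto
  have a0: "tm q = i1 mod 2" using P1[of 0] m t[of q] by simp
  have a1: "tm (q+1) = (i1 + 1) mod 2"
  proof -
    have "tm (m + 2^n) = (i1 + tm (2^n)) mod 2" using P1[of "2^n"] by simp
    moreover have "m + 2^n = 2^n*(q+1)" using m by (simp add: algebra_simps)
    ultimately have "tm (2^n*(q+1)) = (i1 + tm (2^n)) mod 2" by metis
    thus ?thesis using t[of "q+1"] tm_pow0[of n] by simp
  qed
  have a2: "tm (q+2) = i2 mod 2"
  proof -
    have "tm (m + 2^Suc n + 0) = (i2 + tm 0) mod 2" using P2[of 0] by simp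
    moreover have "m + 2^Suc n + 0 = 2^n*(q+2)" using m by (simp add: algebra_simps)
    ultimately have "tm (2^n*(q+2)) = (i2 + tm 0) mod 2" by metis
    thus ?thesis using t[of "q+2"] by simp
  qed
  have a3: "tm (q+3) = (i2 + 1) mod 2"
  proof -
    have "tm (m + 2^Suc n + 2^n) = (i2 + tm (2^n)) mod 2" using P2[of "2^n"] by simp
    moreover have "m + 2^Suc n + 2^n = 2^n*(q+3)" using m by (simp add: algebra_simps)
    ultimately have "tm (2^n*(q+3)) = (i2 + tm (2^n)) mod 2" by metis
    thus ?thesis using t[of "q+3"] tm_pow0[of n] by simp
  qed
  have "even q" by (rule baseB) (simp_all only: a0 a1 a2 a3 mod_succ_ne not_False_eq_True)
  then show ?case using m by auto
qed

lemma tm_1: "tm 1 = 1" using tm_pow0[of 0] by simp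
lemma tm_5: "tm 5 = 0"
proof -
  have "tm 2 = 1" using tm_double[of 1] tm_1 by simp
  thus ?thesis using tm_double[of 2] by simp
qed
lemma tm_6: "tm 6 = 0"
proof -
  have "tm 3 = 0" using tm_double[of 1] tm_1 by simp
  thus ?thesis using tm_double[of 3] by simp
qed

lemma tmZ_emb:
  assumes "even N" "- (2^N) \<le> x" "x < 2^N"
  shows "tmZ x = tm (nat (6*2^N + x))"
proof (cases "x \<ge> 0")
  case True
  have xn: "nat x < 2^N" using assms(3) True
    by (metis nat_less_iff of_nat_numeral of_nat_power)
  have "nat (6*2^N + x) = 2^N*6 + nat x" using True by (simp add: nat_add_distrib nat_mult_distrib nat_power_eq)
  hence "tm (nat (6*2^N + x)) = (tm 6 + tm (nat x)) mod 2" using tm_split[OF xn, of 6] by simp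
  also have "\<dots> = tm (nat x)" using tm_6 tm_le1[of "nat x"] by simp
  finally show ?thesis using True by (simp add: tmZ_def)
next
  case False
  define j where "j = nat (- x - 1)"
  have ji: "int j = - x - 1" using False j_def by simp
  have jn: "j < 2^N" using ji assms(2)
    by (metis add.commute diff_less_eq less_add_one of_nat_less_iff of_nat_numeral of_nat_power uminus_add_conv_diff le_less_trans linorder_not_le minus_le_iff)
  have r: "2^N - 1 - j < (2::nat)^N" using jn by simp
  have "int (2^N*5 + (2^N - 1 - j)) = 6*2^N + x" using jn ji by (simp add: of_nat_diff)
  hence e: "nat (6*2^N + x) = 2^N*5 + (2^N - 1 - j)" by linarith
  have "tm (nat (6*2^N + x)) = (tm 5 + tm (2^N - 1 - j)) mod 2" unfolding e by (rule tm_split[OF r])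
  also have "\<dots> = (N + tm j) mod 2" using tm_5 tm_compl[OF jn] by simp
  also have "\<dots> = tm j" using assms(1) tm_01[of j] by (auto elim!: evenE)
  finally show ?thesis using False j_def by (simp add: tmZ_def)
qed

lemma lang_emb: assumes "w \<in> tm_language" shows "\<exists>M. \<forall>k<length w. w!k = tm (M+k)"
proof -
  obtain a b where w: "w = map tmZ [a..b]" "a \<le> b" using assms unfolding tm_language_def by blast
  define N where "N = 2*(nat \<bar>a\<bar> + nat \<bar>b\<bar>)"
  have ev: "even N" unfolding N_def by simp
  have "nat \<bar>a\<bar> \<le> N" "nat \<bar>b\<bar> \<le> N" unfolding N_def by auto
  hence "nat \<bar>a\<bar> < 2^N" "nat \<bar>b\<bar> < 2^N" using less_exp[of N] by (meson le_less_trans)+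
  hence ab: "\<bar>a\<bar> < 2^N" "\<bar>b\<bar> < 2^N"
    by (metis nat_less_iff abs_ge_zero of_nat_numeral of_nat_power)+
  define M where "M = nat (6*2^N + a)"
  have "\<forall>k<length w. w!k = tm (M+k)"
  proof (intro allI impI)
    fix k assume k: "k < length w"
    hence kb: "a + int k \<le> b" using w by simp
    have "w!k = tmZ (a + int k)" using w kb k by simp
    also have "\<dots> = tm (nat (6*2^N + (a + int k)))"
      by (rule tmZ_emb[OF ev]) (use ab kb in auto)
    also have "nat (6*2^N + (a + int k)) = M + k" unfolding M_def using ab by auto
    finally show "w!k = tm (M+k)" .
  qed
  thus ?thesis by blast
qed

lemma nth_block: "i \<le> 1 \<Longrightarrow> k < 2^n \<Longrightarrow> block i n ! k = (i + tm k) mod 2"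
  by (simp add: block_map)

lemma length_block[simp]: "length (block i n) = 2^n"
  by (induction n arbitrary: i) auto

lemma block_eq: assumes "length \<alpha> = 2^n" "\<forall>k<2^n. \<alpha>!k = tm (2^n*q + k)"
  shows "\<alpha> = block (tm q) n"
proof (rule nth_equalityI)
  show "length \<alpha> = length (block (tm q) n)" using assms by simp
  fix k assume "k < length \<alpha>"
  hence k: "k < 2^n" using assms by simp
  show "\<alpha>!k = block (tm q) n ! k" using assms(2) k tm_split[OF k, of q] nth_block[OF tm_le1 k] by simp
qed

theorem lemma3p3:
  fixes n :: nat and \<alpha> :: "nat list"
  assumes "set \<alpha> \<subseteq> {0, 1}"
    and "length \<alpha> = 2 ^ n"
    and "\<exists>i1 \<in> {0, 1}. \<exists>i2 \<in> {0, 1}.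
           block i1 n @ block i2 n @ \<alpha> \<in> tm_language
         \<or> \<alpha> @ block i1 n @ block i2 n \<in> tm_language"
  shows "\<exists>i \<in> {0, 1}. \<alpha> = block i n"
proof -
  from assms(3) obtain i1 i2 where i: "i1 \<le> 1" "i2 \<le> 1" and
    c: "block i1 n @ block i2 n @ \<alpha> \<in> tm_language \<or> \<alpha> @ block i1 n @ block i2 n \<in> tm_language"
    by auto
  have fin: "\<alpha> = block (tm q) n \<Longrightarrow> ?thesis" for q using tm_01[of q] by auto
  from c show ?thesis
  proof
    assume h: "block i1 n @ block i2 n @ \<alpha> \<in> tm_language"
    let ?w = "block i1 n @ block i2 n @ \<alpha>"
    obtain M where M: "\<forall>k<length ?w. ?w!k = tm (M+k)" using lang_emb[OF h] by blast
    have p1: "\<forall>k<2^n. tm (M+k) = (i1 + tm k) mod 2"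
    proof (intro allI impI)
      fix k :: nat assume k: "k < 2^n"
      have "?w!k = tm (M+k)" using M k assms(2) by simp
      thus "tm (M+k) = (i1 + tm k) mod 2" using k nth_block[OF i(1) k] by (simp add: nth_append)
    qed
    have p2: "\<forall>k<2^n. tm (M+2^n+k) = (i2 + tm k) mod 2"
    proof (intro allI impI)
      fix k :: nat assume k: "k < 2^n"
      have "?w!(2^n+k) = tm (M+(2^n+k))" using M k assms(2) by simp
      thus "tm (M+2^n+k) = (i2 + tm k) mod 2" using k nth_block[OF i(2) k] by (simp add: nth_append add.assoc)
    qed
    obtain q where q: "M = 2^n*q" using sync[OF p1 p2] by blast
    have "\<forall>k<2^n. \<alpha>!k = tm (2^n*(q+2) + k)"
    proof (intro allI impI)
      fix k :: nat assume k: "k < 2^n"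
      have "?w!(2*2^n+k) = tm (M+(2*2^n+k))" using M k assms(2) by simp
      moreover have "M+(2*2^n+k) = 2^n*(q+2) + k" using q by (simp add: algebra_simps)
      ultimately show "\<alpha>!k = tm (2^n*(q+2) + k)" by (simp add: nth_append)
    qed
    thus ?thesis using block_eq[OF assms(2)] fin by blast
  next
    assume h: "\<alpha> @ block i1 n @ block i2 n \<in> tm_language"
    let ?w = "\<alpha> @ block i1 n @ block i2 n"
    obtain M where M: "\<forall>k<length ?w. ?w!k = tm (M+k)" using lang_emb[OF h] by blast
    have p1: "\<forall>k<2^n. tm ((M+2^n)+k) = (i1 + tm k) mod 2"
    proof (intro allI impI)
      fix k :: nat assume k: "k < 2^n"
      have "?w!(2^n+k) = tm (M+(2^n+k))" using M k assms(2) by simp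
      thus "tm ((M+2^n)+k) = (i1 + tm k) mod 2" using k nth_block[OF i(1) k] assms(2) by (simp add: nth_append add.assoc)
    qed
    have p2: "\<forall>k<2^n. tm ((M+2^n)+2^n+k) = (i2 + tm k) mod 2"
    proof (intro allI impI)
      fix k :: nat assume k: "k < 2^n"
      have "?w!(2*2^n+k) = tm (M+(2*2^n+k))" using M k assms(2) by simp
      moreover have "M+(2*2^n+k) = (M+2^n)+2^n+k" by simp
      ultimately show "tm ((M+2^n)+2^n+k) = (i2 + tm k) mod 2" using k nth_block[OF i(2) k] assms(2) by (simp add: nth_append)
    qed
    have "2^n dvd M + 2^n" using sync[OF p1 p2] .
    then obtain q where q: "M = 2^n*q" by (metis dvd_add_left_iff dvd_refl dvdE)
    have "\<forall>k<2^n. \<alpha>!k = tm (2^n*q + k)"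
    proof (intro allI impI)
      fix k :: nat assume k: "k < 2^n"
      have "?w!k = tm (M+k)" using M k assms(2) by simp
      thus "\<alpha>!k = tm (2^n*q + k)" using q k assms(2) by (simp add: nth_append)
    qed
    thus ?thesis using block_eq[OF assms(2)] fin by blast
  qed
qed

end
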